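(* Let $\mathcal{M}=(S,E,T)$ be a trivially parametric Markov chain in which every non-target state has at least two successors. Then there is a trivially parametric Markov chain $\mathcal{N}=(S',E',T)$ with $S\subseteq S'$ and $|sE'|=2$ for all $s\in S'\setminus T$, such that for every graph-preserving valuation $\mathsf{val}$ of $\mathcal{M}$ there is a graph-preserving valuation $\mathsf{val}'$ of $\mathcal{N}$ with $\mathbb{P}^s_{\mathcal{M}^{\mathsf{val}}}[\Diamond\mathit{fin}]=\mathbb{P}^s_{\mathcal{N}^{\mathsf{val}'}}[\Diamond\mathit{fin}]$ for all $s\in S$, and conversely for every graph-preserving valuation $\mathsf{val}'$ of $\mathcal{N}$ there is a graph-preserving valuation $\mathsf{val}$ of $\mathcal{M}$ with the same equalities.
   Context: A trivially parametric Markov chain $\mathcal{M}=(S,E,T)$ consists of a finite set of states $S$, targets $T=\{\mathit{fin},\mathit{fail}\}$ with no outgoing edges, and edges $E\subseteq (S\setminus T)\times S$; $sE$ is the successor set of $s$. A graph-preserving valuation assigns to each non-target $s$ a probability distribution with full support on $sE$; the resulting Markov chain is $\mathcal{M}^{\mathsf{val}}$, and $\mathbb{P}^s_{\mathcal{M}^{\mathsf{val}}}[\Diamond\mathit{fin}]$ is the probability of reaching $\mathit{fin}$ from $s$ in it. *)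

theory Defs
  imports Complex_Main
begin

text \<open>A trivially parametric Markov chain (S, E, T) with targets T = {fin, fail}.\<close>
definition tpmc :: "'a set \<Rightarrow> ('a \<times> 'a) set \<Rightarrow> 'a \<Rightarrow> 'a \<Rightarrow> bool" where
  "tpmc S E fin fail \<longleftrightarrow> finite S \<and> fin \<in> S \<and> fail \<in> S \<and> fin \<noteq> fail \<and>
     E \<subseteq> (S - {fin, fail}) \<times> S"

definition succ :: "('a \<times> 'a) set \<Rightarrow> 'a \<Rightarrow> 'a set" where
  "succ E s = {t. (s, t) \<in> E}"

definition gp_val :: "'a set \<Rightarrow> ('a \<times> 'a) set \<Rightarrow> 'a \<Rightarrow> 'a \<Rightarrow> ('a \<Rightarrow> 'a \<Rightarrow> real) \<Rightarrow> bool" where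
  "gp_val S E fin fail val \<longleftrightarrow>
     (\<forall>s \<in> S - {fin, fail}.
        (\<forall>t. (s, t) \<in> E \<longrightarrow> val s t > 0) \<and>
        (\<forall>t. (s, t) \<notin> E \<longrightarrow> val s t = 0) \<and>
        (\<Sum>t \<in> succ E s. val s t) = 1)"

fun reach_bounded :: "('a \<times> 'a) set \<Rightarrow> 'a \<Rightarrow> 'a \<Rightarrow> ('a \<Rightarrow> 'a \<Rightarrow> real) \<Rightarrow> nat \<Rightarrow> 'a \<Rightarrow> real" where
  "reach_bounded E fin fail val 0 s = (if s = fin then 1 else 0)"
| "reach_bounded E fin fail val (Suc n) s =
     (if s = fin then 1 else if s = fail then 0
      else (\<Sum>t \<in> succ E s. val s t * reach_bounded E fin fail val n t))"

text \<open>Reachability probability P^s[<>fin] = sup over n of the n-step-bounded probability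
  (the measure of the increasing union of the events "fin reached within n steps").\<close>
definition reach_prob :: "('a \<times> 'a) set \<Rightarrow> 'a \<Rightarrow> 'a \<Rightarrow> ('a \<Rightarrow> 'a \<Rightarrow> real) \<Rightarrow> 'a \<Rightarrow> real" where
  "reach_prob E fin fail val s = (SUP n. reach_bounded E fin fail val n s)"

end

theory Submission imports Defs "HOL-Library.Countable_Set" "HOL-Library.Nat_Bijection"
begin

lemma succ_sub:
  assumes "tpmc S E fin fail"
  shows "succ E x \<subseteq> S" "finite (succ E x)" "x \<notin> S - {fin, fail} \<Longrightarrow> succ E x = {}"
  using assms unfolding tpmc_def succ_def by (auto intro: finite_subset)

lemma rb_bounds:
  assumes "tpmc S E fin fail" "gp_val S E fin fail v"
  shows "0 \<le> reach_bounded E fin fail v n x \<and> reach_bounded E fin fail v n x \<le> 1"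
proof (induction n arbitrary: x)
  case 0 show ?case by simp
next
  case (Suc n)
  show ?case
  proof (cases "x \<in> S - {fin,fail}")
    case True
    have v: "\<forall>t\<in>succ E x. v x t > 0" and s1: "(\<Sum>t\<in>succ E x. v x t) = 1"
      using assms(2) True unfolding gp_val_def by (auto simp: succ_def)
    have a: "0 \<le> (\<Sum>t\<in>succ E x. v x t * reach_bounded E fin fail v n t)"
      by (intro sum_nonneg) (use Suc v in \<open>auto intro: mult_nonneg_nonneg less_imp_le\<close>)
    have "(\<Sum>t\<in>succ E x. v x t * reach_bounded E fin fail v n t) \<le> (\<Sum>t\<in>succ E x. v x t)"
      by (intro sum_mono) (use Suc v in \<open>auto intro: mult_left_le less_imp_le\<close>)
    then show ?thesis using a s1 True by simp
  next
    case False
    then show ?thesis using succ_sub[OF assms(1), of x] by auto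
  qed
qed

lemma rb_mono_Suc:
  assumes "tpmc S E fin fail" "gp_val S E fin fail v"
  shows "reach_bounded E fin fail v n x \<le> reach_bounded E fin fail v (Suc n) x"
proof (induction n arbitrary: x)
  case 0 show ?case
  proof (cases "x = fin")
    case False
    then show ?thesis using rb_bounds[OF assms, of "Suc 0" x] by (simp del: reach_bounded.simps(2))
  qed simp
next
  case (Suc n)
  show ?case
  proof (cases "x \<in> S - {fin,fail}")
    case True
    have v: "\<forall>t\<in>succ E x. v x t > 0"
      using assms(2) True unfolding gp_val_def by (auto simp: succ_def)
    have "(\<Sum>t\<in>succ E x. v x t * reach_bounded E fin fail v n t) \<le> (\<Sum>t\<in>succ E x. v x t * reach_bounded E fin fail v (Suc n) t)"
      by (intro sum_mono) (use Suc v in \<open>auto intro: mult_left_mono less_imp_le\<close>)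
    then show ?thesis using True by simp
  next
    case False
    then show ?thesis using succ_sub[OF assms(1), of x] by auto
  qed
qed

lemma sup_mult:
  fixes f :: "nat \<Rightarrow> real"
  assumes "incseq f" "\<And>n. f n \<le> 1" "D \<ge> 1"
  shows "(SUP m. f m) = (SUP n. f (n * D))"
proof (rule antisym)
  have bdd: "bdd_above (range f)" using assms(2) by (intro bdd_aboveI[of _ 1]) auto
  have bdd2: "bdd_above (range (\<lambda>n. f (n * D)))" using assms(2) by (intro bdd_aboveI[of _ 1]) auto
  show "(SUP m. f m) \<le> (SUP n. f (n * D))"
  proof (rule cSUP_least)
    fix m
    have "f m \<le> f (m * D)" using assms(1,3) by (simp add: incseq_def)
    also have "\<dots> \<le> (SUP n. f (n * D))" by (rule cSUP_upper[OF _ bdd2]) simp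
    finally show "f m \<le> (SUP n. f (n * D))" .
  qed simp
  show "(SUP n. f (n * D)) \<le> (SUP m. f m)"
    by (rule cSUP_least) (auto intro: cSUP_upper[OF _ bdd])
qed

lemma rb_incseq:
  assumes "tpmc S E fin fail" "gp_val S E fin fail v"
  shows "incseq (\<lambda>n. reach_bounded E fin fail v n x)"
  by (rule incseq_SucI) (rule rb_mono_Suc[OF assms])

lemma sum_pairs: "(\<Sum>q<2*n. f q) = (\<Sum>p<n. f (2*p) + f (2*p+1::nat)) " for f :: "nat \<Rightarrow> real"
  by (induction n) (auto simp: sum.distrib)


lemma cmul_div: "(n::nat) > 0 \<Longrightarrow> of_nat n * (x / of_nat n) = (x::real)"
  by simp

locale bin =
  fixes S :: "'a set" and E :: "('a \<times> 'a) set" and fin fail :: 'a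
  assumes tp: "tpmc S E fin fail" and deg: "\<forall>s \<in> S - {fin,fail}. card (succ E s) \<ge> 2"
begin

definition "D = card S"
definition "k s = card (succ E s)"
definition "enum s = (SOME h. bij_betw h {0..<k s} (succ E s))"
definition "lab s q = enum s (q mod k s)"
definition "code s d p = prod_encode (to_nat_on S s, prod_encode (d,p))"
definition "G s d p = (if d = 0 then Inl s else if d < D then Inr (code s d p) else Inl (lab s p))"
definition "T = {(s,d,p). s \<in> S - {fin,fail} \<and> d < D \<and> p < (2::nat)^d}"
definition "E' = {(G s d p, G s (Suc d) q) | s d p q. (s,d,p) \<in> T \<and> (q = 2*p \<or> q = 2*p+1)}"
definition "S' = Inl ` S \<union> (\<lambda>(s,d,p). G s d p) ` T"

lemma finS: "finite S" and finS_in: "fin \<in> S" "fail \<in> S" "fin \<noteq> fail"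
  and Esub: "E \<subseteq> (S - {fin, fail}) \<times> S"
  using tp unfolding tpmc_def by auto

lemma D_ge: "D \<ge> 2"
proof -
  have "{fin, fail} \<subseteq> S" using finS_in by auto
  then have "card {fin,fail} \<le> card S" using finS by (rule card_mono[rotated])
  then show ?thesis using finS_in unfolding D_def by simp
qed

lemma k_bounds: "s \<in> S - {fin,fail} \<Longrightarrow> 2 \<le> k s \<and> k s \<le> D"
  using deg card_mono[OF finS succ_sub(1)[OF tp]] unfolding k_def D_def by auto

lemma enum_bij: "s \<in> S - {fin,fail} \<Longrightarrow> bij_betw (enum s) {0..<k s} (succ E s)"
proof -
  have "\<exists>h. bij_betw h {0..<card (succ E s)} (succ E s)"
    by (rule ex_bij_betw_nat_finite[OF succ_sub(2)[OF tp]])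
  then show ?thesis unfolding enum_def k_def by (rule someI_ex)
qed

lemma lab_in: "s \<in> S - {fin,fail} \<Longrightarrow> lab s q \<in> succ E s"
proof -
  assume s: "s \<in> S - {fin,fail}"
  have "q mod k s \<in> {0..<k s}" using k_bounds[OF s] by simp
  then show ?thesis using enum_bij[OF s] unfolding lab_def bij_betw_def by auto
qed

lemma lab_surj: "s \<in> S - {fin,fail} \<Longrightarrow> lab s ` {..<2^D} = succ E s"
proof
  assume s: "s \<in> S - {fin,fail}"
  show "lab s ` {..<2^D} \<subseteq> succ E s" using lab_in[OF s] by auto
  show "succ E s \<subseteq> lab s ` {..<2^D}"
  proof
    fix t assume "t \<in> succ E s"
    then obtain i where i: "i \<in> {0..<k s}" "t = enum s i"
      using enum_bij[OF s] by (metis (no_types) bij_betw_def imageE)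
    have "D < 2^D" by (rule less_exp)
    then have "i < 2^D" using i k_bounds[OF s] by (simp del: less_exp)
    moreover have "lab s i = t" using i unfolding lab_def by simp
    ultimately show "t \<in> lab s ` {..<2^D}" by force
  qed
qed

lemma lab_neq: "s \<in> S - {fin,fail} \<Longrightarrow> lab s (2*p) \<noteq> lab s (2*p+1)"
proof
  assume s: "s \<in> S - {fin,fail}" and eq: "lab s (2*p) = lab s (2*p+1)"
  have kk: "2 \<le> k s" using k_bounds[OF s] by simp
  have "inj_on (enum s) {0..<k s}" using enum_bij[OF s] unfolding bij_betw_def by simp
  moreover have "(2*p) mod k s \<in> {0..<k s}" "(2*p+1) mod k s \<in> {0..<k s}" using kk by auto
  ultimately have "(2*p) mod k s = (2*p+1) mod k s" using eq unfolding lab_def inj_on_def by blast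
  then show False using kk by (simp add: mod_Suc split: if_splits)
qed

lemma code_inj: "s \<in> S \<Longrightarrow> s' \<in> S \<Longrightarrow> code s d p = code s' d' p' \<Longrightarrow> s = s' \<and> d = d' \<and> p = p'"
proof -
  assume a: "s \<in> S" "s' \<in> S" "code s d p = code s' d' p'"
  have "inj_on (to_nat_on S) S" by (rule inj_on_to_nat_on) (rule countable_finite[OF finS])
  then show ?thesis using a unfolding code_def by (auto simp: prod_encode_eq inj_on_def)
qed

lemma G_inj: "(s,d,p) \<in> T \<Longrightarrow> (s',d',p') \<in> T \<Longrightarrow> G s d p = G s' d' p' \<Longrightarrow> s = s' \<and> d = d' \<and> p = p'"
  using code_inj[of s s' d p d' p'] by (cases "d = 0"; cases "d' = 0") (auto simp: G_def T_def)

lemma G_child_neq: "(s,d,p) \<in> T \<Longrightarrow> G s (Suc d) (2*p) \<noteq> G s (Suc d) (2*p+1)"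
proof -
  assume a: "(s,d,p) \<in> T"
  then have s: "s \<in> S - {fin,fail}" unfolding T_def by simp
  show ?thesis
  proof (cases "Suc d < D")
    case True
    then show ?thesis using code_inj[of s s "Suc d" "2*p" "Suc d" "2*p+1"] s by (auto simp: G_def)
  next
    case False
    then show ?thesis using lab_neq[OF s, of p] by (simp add: G_def)
  qed
qed

lemma G_nt: "(s,d,p) \<in> T \<Longrightarrow> G s d p \<in> S' \<and> G s d p \<noteq> Inl fin \<and> G s d p \<noteq> Inl fail"
proof -
  assume a: "(s,d,p) \<in> T"
  have "G s d p \<in> (\<lambda>(s,d,p). G s d p) ` T" by (rule image_eqI[where x="(s,d,p)"]) (use a in auto)
  then have "G s d p \<in> S'" unfolding S'_def by blast
  moreover have "G s d p \<noteq> Inl fin \<and> G s d p \<noteq> Inl fail"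
    using a by (cases "d = 0") (auto simp: G_def T_def)
  ultimately show ?thesis by blast
qed

lemma G_child_in: "(s,d,p) \<in> T \<Longrightarrow> q < 2^(Suc d) \<Longrightarrow> G s (Suc d) q \<in> S'"
proof -
  assume a: "(s,d,p) \<in> T" "q < 2^(Suc d)"
  show ?thesis
  proof (cases "Suc d < D")
    case True
    then have "(s, Suc d, q) \<in> T" using a unfolding T_def by auto
    then show ?thesis using G_nt by blast
  next
    case False
    then have "G s (Suc d) q = Inl (lab s q)" unfolding G_def by simp
    moreover have "lab s q \<in> S" using lab_in[of s q] a succ_sub(1)[OF tp] unfolding T_def by auto
    ultimately show ?thesis unfolding S'_def by auto
  qed
qed

lemma succ_G: "(s,d,p) \<in> T \<Longrightarrow> succ E' (G s d p) = {G s (Suc d) (2*p), G s (Suc d) (2*p+1)}"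
proof -
  assume a: "(s,d,p) \<in> T"
  show ?thesis
  proof
    show "{G s (Suc d) (2*p), G s (Suc d) (2*p+1)} \<subseteq> succ E' (G s d p)"
      using a unfolding succ_def E'_def by blast
    show "succ E' (G s d p) \<subseteq> {G s (Suc d) (2*p), G s (Suc d) (2*p+1)}"
    proof
      fix y assume "y \<in> succ E' (G s d p)"
      then obtain s' d' p' q where b: "(s',d',p') \<in> T" "G s d p = G s' d' p'" "q = 2*p' \<or> q = 2*p'+1"
        "y = G s' (Suc d') q" unfolding succ_def E'_def by blast
      from G_inj[OF a b(1) b(2)] b show "y \<in> {G s (Suc d) (2*p), G s (Suc d) (2*p+1)}" by auto
    qed
  qed
qed

lemma S'_cases: "x \<in> S' - {Inl fin, Inl fail} \<Longrightarrow> \<exists>s d p. (s,d,p) \<in> T \<and> x = G s d p"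
proof -
  assume x: "x \<in> S' - {Inl fin, Inl fail}"
  show ?thesis
  proof (cases "x \<in> Inl ` S")
    case True
    then obtain s where s: "s \<in> S" "x = Inl s" by auto
    then have "(s,0,0) \<in> T" using x D_ge unfolding T_def by auto
    moreover have "x = G s 0 0" using s unfolding G_def by simp
    ultimately show ?thesis by blast
  next
    case False
    then show ?thesis using x unfolding S'_def by auto
  qed
qed

lemma tpN: "tpmc S' E' (Inl fin) (Inl fail)"
proof -
  have "finite T"
  proof (rule finite_subset)
    show "T \<subseteq> S \<times> {..<D} \<times> {..<2^D}" unfolding T_def
      by (auto intro: less_le_trans[OF _ power_increasing[of _ D "2::nat"]])
  qed (use finS in auto)
  then have "finite S'" unfolding S'_def using finS by auto
  moreover have "E' \<subseteq> (S' - {Inl fin, Inl fail}) \<times> S'"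
  proof
    fix e assume "e \<in> E'"
    then obtain s d p q where b: "(s,d,p) \<in> T" "q = 2*p \<or> q = 2*p+1" "e = (G s d p, G s (Suc d) q)"
      unfolding E'_def by blast
    have "q < 2^(Suc d)" using b(1,2) unfolding T_def by auto
    then show "e \<in> (S' - {Inl fin, Inl fail}) \<times> S'" using G_nt[OF b(1)] G_child_in[OF b(1)] b(3) by auto
  qed
  ultimately show ?thesis unfolding tpmc_def S'_def using finS_in by auto
qed

lemma card2: "\<forall>x \<in> S' - {Inl fin, Inl fail}. card (succ E' x) = 2"
proof
  fix x assume "x \<in> S' - {Inl fin, Inl fail}"
  then obtain s d p where a: "(s,d,p) \<in> T" "x = G s d p" using S'_cases by blast
  show "card (succ E' x) = 2" using succ_G[OF a(1)] G_child_neq[OF a(1)] a(2) by simp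
qed


abbreviation rbN where "rbN w \<equiv> reach_bounded E' (Inl fin) (Inl fail) w"

lemma rb_G_step:
  assumes "(s,d,p) \<in> T"
  shows "rbN w (Suc n) (G s d p) = w (G s d p) (G s (Suc d) (2*p)) * rbN w n (G s (Suc d) (2*p))
     + w (G s d p) (G s (Suc d) (2*p+1)) * rbN w n (G s (Suc d) (2*p+1))"
  using G_nt[OF assms] succ_G[OF assms] G_child_neq[OF assms] by simp

primrec Lm :: "('a + nat \<Rightarrow> 'a + nat \<Rightarrow> real) \<Rightarrow> 'a \<Rightarrow> nat \<Rightarrow> nat \<Rightarrow> real" where
  "Lm w s 0 q = 1"
| "Lm w s (Suc d) q = Lm w s d (q div 2) * w (G s d (q div 2)) (G s (Suc d) q)"

lemma unify:
  assumes s: "s \<in> S - {fin,fail}"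
  shows "d \<le> D \<Longrightarrow> rbN w (m + D) (Inl s) = (\<Sum>q<2^d. Lm w s d q * rbN w (m + (D - d)) (G s d q))"
proof (induction d)
  case 0
  then show ?case by (simp add: G_def)
next
  case (Suc d)
  then have dD: "d < D" by simp
  have eq: "m + (D - d) = Suc (m + (D - Suc d))" using dD by simp
  have "rbN w (m + D) (Inl s) = (\<Sum>p<2^d. Lm w s d p * rbN w (m + (D - d)) (G s d p))"
    using Suc by simp
  also have "\<dots> = (\<Sum>p<2^d. Lm w s (Suc d) (2*p) * rbN w (m + (D - Suc d)) (G s (Suc d) (2*p))
      + Lm w s (Suc d) (2*p+1) * rbN w (m + (D - Suc d)) (G s (Suc d) (2*p+1)))"
  proof (rule sum.cong[OF refl])
    fix p assume "p \<in> {..<(2::nat)^d}"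
    then have T: "(s,d,p) \<in> T" using s dD unfolding T_def by auto
    have d1: "(2*p) div 2 = p" "(2*p+1) div 2 = p" by auto
    show "Lm w s d p * rbN w (m + (D - d)) (G s d p) = Lm w s (Suc d) (2*p) * rbN w (m + (D - Suc d)) (G s (Suc d) (2*p))
      + Lm w s (Suc d) (2*p+1) * rbN w (m + (D - Suc d)) (G s (Suc d) (2*p+1))"
      unfolding eq rb_G_step[OF T] Lm.simps d1 by (simp add: algebra_simps)
  qed
  also have "\<dots> = (\<Sum>q<2*2^d. Lm w s (Suc d) q * rbN w (m + (D - Suc d)) (G s (Suc d) q))"
    by (rule sum_pairs[symmetric])
  finally show ?case by simp
qed

lemma w_pos_edge:
  assumes "gp_val S' E' (Inl fin) (Inl fail) w" "(s,d,p) \<in> T" "q = 2*p \<or> q = 2*p+1"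
  shows "w (G s d p) (G s (Suc d) q) > 0"
proof -
  have "(G s d p, G s (Suc d) q) \<in> E'" using assms(2,3) unfolding E'_def by blast
  then show ?thesis using assms(1) G_nt[OF assms(2)] unfolding gp_val_def by blast
qed

lemma w_sum:
  assumes "gp_val S' E' (Inl fin) (Inl fail) w" "(s,d,p) \<in> T"
  shows "w (G s d p) (G s (Suc d) (2*p)) + w (G s d p) (G s (Suc d) (2*p+1)) = 1"
proof -
  have "(\<Sum>t\<in>succ E' (G s d p). w (G s d p) t) = 1"
    using assms(1) G_nt[OF assms(2)] unfolding gp_val_def by blast
  then show ?thesis using succ_G[OF assms(2)] G_child_neq[OF assms(2)] by simp
qed

lemma Lm_pos:
  assumes w: "gp_val S' E' (Inl fin) (Inl fail) w" and s: "s \<in> S - {fin,fail}"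
  shows "d \<le> D \<Longrightarrow> q < 2^d \<Longrightarrow> Lm w s d q > 0"
proof (induction d arbitrary: q)
  case 0 then show ?case by simp
next
  case (Suc d)
  have q2: "q div 2 < 2^d" using Suc.prems by auto
  have T: "(s,d,q div 2) \<in> T" using s Suc.prems q2 unfolding T_def by auto
  have "q = 2 * (q div 2) \<or> q = 2 * (q div 2) + 1" by auto
  from w_pos_edge[OF w T this] Suc.IH[OF _ q2] Suc.prems show ?case by simp
qed

lemma Lm_sum:
  assumes w: "gp_val S' E' (Inl fin) (Inl fail) w" and s: "s \<in> S - {fin,fail}"
  shows "d \<le> D \<Longrightarrow> (\<Sum>q<2^d. Lm w s d q) = 1"
proof (induction d)
  case 0 then show ?case by simp
next
  case (Suc d)
  have "(\<Sum>q<2^Suc d. Lm w s (Suc d) q) = (\<Sum>q<2*2^d. Lm w s (Suc d) q)" by simp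
  also have "\<dots> = (\<Sum>p<2^d. Lm w s (Suc d) (2*p) + Lm w s (Suc d) (2*p+1))" by (rule sum_pairs)
  also have "\<dots> = (\<Sum>p<2^d. Lm w s d p)"
  proof (rule sum.cong[OF refl])
    fix p assume "p \<in> {..<(2::nat)^d}"
    then have T: "(s,d,p) \<in> T" using s Suc.prems unfolding T_def by auto
    have d1: "(2*p) div 2 = p" "(2*p+1) div 2 = p" by auto
    show "Lm w s (Suc d) (2*p) + Lm w s (Suc d) (2*p+1) = Lm w s d p"
      using w_sum[OF w T] unfolding Lm.simps d1 by (metis distrib_left mult.right_neutral)
  qed
  finally show ?case using Suc by simp
qed

definition "vM w s t = (\<Sum>q\<in>{q. q < 2^D \<and> lab s q = t}. Lm w s D q)"

lemma key_N:
  assumes s: "s \<in> S - {fin,fail}"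
  shows "rbN w (m + D) (Inl s) = (\<Sum>t\<in>succ E s. vM w s t * rbN w m (Inl t))"
proof -
  have GD: "G s D q = Inl (lab s q)" for q using D_ge unfolding G_def by simp
  have "rbN w (m + D) (Inl s) = (\<Sum>q<2^D. Lm w s D q * rbN w m (Inl (lab s q)))"
    using unify[OF s, of D w m] by (simp add: GD)
  also have "\<dots> = (\<Sum>t\<in>lab s ` {..<2^D}. \<Sum>q\<in>{q. q \<in> {..<2^D} \<and> lab s q = t}. Lm w s D q * rbN w m (Inl (lab s q)))"
    by (rule sum.image_gen) simp
  also have "\<dots> = (\<Sum>t\<in>succ E s. vM w s t * rbN w m (Inl t))"
    unfolding lab_surj[OF s] vM_def sum_distrib_right
    by (intro sum.cong refl) auto
  finally show ?thesis .
qed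

lemma vM_pos:
  assumes w: "gp_val S' E' (Inl fin) (Inl fail) w" and s: "s \<in> S - {fin,fail}" and t: "t \<in> succ E s"
  shows "vM w s t > 0"
proof -
  obtain q where q: "q < 2^D" "lab s q = t" using t lab_surj[OF s] by (metis imageE lessThan_iff)
  show ?thesis unfolding vM_def
    by (rule sum_pos2[where i=q]) (use q in \<open>auto intro!: less_imp_le Lm_pos[OF w s]\<close>)
qed

lemma vM_sum:
  assumes w: "gp_val S' E' (Inl fin) (Inl fail) w" and s: "s \<in> S - {fin,fail}"
  shows "(\<Sum>t\<in>succ E s. vM w s t) = 1"
proof -
  have "(\<Sum>q<2^D. Lm w s D q) = (\<Sum>t\<in>lab s ` {..<2^D}. \<Sum>q\<in>{q. q \<in> {..<2^D} \<and> lab s q = t}. Lm w s D q)"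
    by (rule sum.image_gen) simp
  then show ?thesis using Lm_sum[OF w s, of D] unfolding lab_surj[OF s] vM_def by simp
qed


lemma connect:
  assumes v: "gp_val S E fin fail v" and w: "gp_val S' E' (Inl fin) (Inl fail) w"
   and step: "\<forall>s \<in> S - {fin,fail}. \<forall>m. rbN w (m + D) (Inl s) = (\<Sum>t\<in>succ E s. v s t * rbN w m (Inl t))"
  shows "\<forall>s\<in>S. reach_prob E fin fail v s = reach_prob E' (Inl fin) (Inl fail) w (Inl s)"
proof
  have eq: "\<forall>s\<in>S. rbN w (n*D) (Inl s) = reach_bounded E fin fail v n s" for n
  proof (induction n)
    case 0 then show ?case by auto
  next
    case (Suc n)
    show ?case
    proof
      fix s assume sS: "s \<in> S"
      have "Suc n * D \<noteq> 0" using D_ge by simp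
      then obtain j where j: "Suc n * D = Suc j" using not0_implies_Suc by blast
      show "rbN w (Suc n * D) (Inl s) = reach_bounded E fin fail v (Suc n) s"
      proof (cases "s \<in> {fin, fail}")
        case True
        then show ?thesis unfolding j using finS_in by auto
      next
        case False
        then have s: "s \<in> S - {fin,fail}" using sS by simp
        have "rbN w (Suc n * D) (Inl s) = rbN w (n * D + D) (Inl s)" by (metis add.commute mult_Suc)
        also have "\<dots> = (\<Sum>t\<in>succ E s. v s t * rbN w (n*D) (Inl t))" using step s by blast
        also have "\<dots> = (\<Sum>t\<in>succ E s. v s t * reach_bounded E fin fail v n t)"
          using Suc succ_sub(1)[OF tp, of s] by (intro sum.cong refl) auto
        also have "\<dots> = reach_bounded E fin fail v (Suc n) s" using False by simp
        finally show ?thesis .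
      qed
    qed
  qed
  fix s assume sS: "s \<in> S"
  have "reach_prob E' (Inl fin) (Inl fail) w (Inl s) = (SUP n. rbN w (n * D) (Inl s))"
    unfolding reach_prob_def
    by (rule sup_mult[OF rb_incseq[OF tpN w]]) (use rb_bounds[OF tpN w] D_ge in auto)
  also have "\<dots> = reach_prob E fin fail v s" unfolding reach_prob_def using eq sS by simp
  finally show "reach_prob E fin fail v s = reach_prob E' (Inl fin) (Inl fail) w (Inl s)" by simp
qed

definition "lw v s q = v s (lab s q) / card {q'. q' < 2^D \<and> lab s q' = lab s q}"

primrec Wr :: "('a \<Rightarrow> 'a \<Rightarrow> real) \<Rightarrow> 'a \<Rightarrow> nat \<Rightarrow> nat \<Rightarrow> real" where
  "Wr v s 0 q = lw v s q"
| "Wr v s (Suc j) q = Wr v s j (2*q) + Wr v s j (2*q+1)"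

definition "W v s d q = Wr v s (D - d) q"

definition "wN v x y = (if (x,y) \<in> E' then (SOME r. \<exists>s d p q. (s,d,p) \<in> T \<and> x = G s d p \<and> (q = 2*p \<or> q = 2*p+1)
    \<and> y = G s (Suc d) q \<and> r = W v s (Suc d) q / W v s d p) else 0)"

lemma cnt_pos:
  assumes s: "s \<in> S - {fin,fail}" and t: "t \<in> succ E s"
  shows "card {q. q < 2^D \<and> lab s q = t} > 0"
proof -
  obtain q where q: "q < 2^D" "lab s q = t" using t lab_surj[OF s] by (metis imageE lessThan_iff)
  have "finite {q. q < (2::nat)^D \<and> lab s q = t}" by simp
  moreover have "q \<in> {q. q < 2^D \<and> lab s q = t}" using q by simp
  ultimately show ?thesis by (simp add: card_gt_0_iff) blast
qed

lemma lw_pos: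
  assumes v: "gp_val S E fin fail v" and s: "s \<in> S - {fin,fail}"
  shows "lw v s q > 0"
proof -
  have t: "lab s q \<in> succ E s" by (rule lab_in[OF s])
  then have "v s (lab s q) > 0" using v s unfolding gp_val_def succ_def by blast
  then show ?thesis unfolding lw_def using cnt_pos[OF s t] by simp
qed

lemma Wr_pos:
  assumes v: "gp_val S E fin fail v" and s: "s \<in> S - {fin,fail}"
  shows "Wr v s j q > 0"
  by (induction j arbitrary: q) (auto intro: lw_pos[OF v s] add_pos_pos)

lemma Wr_sum: "(\<Sum>q<2^i. Wr v s j q) = (\<Sum>q<2^(i+j). lw v s q)"
proof (induction j arbitrary: i)
  case 0 then show ?case by simp
next
  case (Suc j)
  have "(\<Sum>q<2^i. Wr v s (Suc j) q) = (\<Sum>q<2*2^i. Wr v s j q)"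
    by (simp add: sum_pairs)
  also have "\<dots> = (\<Sum>q<2^(Suc i + j). lw v s q)" using Suc[of "Suc i"] by simp
  finally show ?case by simp
qed

lemma lw_total:
  assumes v: "gp_val S E fin fail v" and s: "s \<in> S - {fin,fail}"
  shows "(\<Sum>q<2^D. lw v s q) = 1"
proof -
  have "(\<Sum>q<2^D. lw v s q) = (\<Sum>t\<in>lab s ` {..<2^D}. \<Sum>q\<in>{q. q \<in> {..<2^D} \<and> lab s q = t}. lw v s q)"
    by (rule sum.image_gen) simp
  also have "\<dots> = (\<Sum>t\<in>succ E s. v s t)"
    unfolding lab_surj[OF s]
  proof (rule sum.cong[OF refl])
    fix t assume t: "t \<in> succ E s"
    have "(\<Sum>q\<in>{q. q \<in> {..<2^D} \<and> lab s q = t}. lw v s q) = (\<Sum>q\<in>{q. q < 2^D \<and> lab s q = t}. v s t / card {q. q < 2^D \<and> lab s q = t})"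
      unfolding lw_def by (rule sum.cong) auto
    also have "\<dots> = v s t" using cnt_pos[OF s t] by (simp only: sum_constant) (rule cmul_div)
    finally show "(\<Sum>q\<in>{q. q \<in> {..<2^D} \<and> lab s q = t}. lw v s q) = v s t" .
  qed
  also have "\<dots> = 1" using v s unfolding gp_val_def by blast
  finally show ?thesis .
qed

lemma W00: assumes v: "gp_val S E fin fail v" and s: "s \<in> S - {fin,fail}" shows "W v s 0 0 = 1"
  using Wr_sum[where i=0 and j=D and v=v and s=s] lw_total[OF v s] unfolding W_def by simp

lemma W_split: "d < D \<Longrightarrow> W v s d p = W v s (Suc d) (2*p) + W v s (Suc d) (2*p+1)"
proof -
  assume "d < D"
  then have "D - d = Suc (D - Suc d)" by simp
  then show ?thesis unfolding W_def by simp
qed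

lemma wN_eq:
  assumes a: "(s,d,p) \<in> T" and q: "q = 2*p \<or> q = 2*p+1"
  shows "wN v (G s d p) (G s (Suc d) q) = W v s (Suc d) q / W v s d p"
proof -
  let ?P = "\<lambda>r. \<exists>s' d' p' q'. (s',d',p') \<in> T \<and> G s d p = G s' d' p' \<and> (q' = 2*p' \<or> q' = 2*p'+1)
    \<and> G s (Suc d) q = G s' (Suc d') q' \<and> r = W v s' (Suc d') q' / W v s' d' p'"
  have e: "(G s d p, G s (Suc d) q) \<in> E'" using a q unfolding E'_def by blast
  have "?P (W v s (Suc d) q / W v s d p)"
    by (rule exI[of _ s], rule exI[of _ d], rule exI[of _ p], rule exI[of _ q]) (use a q in simp)
  then have "?P (SOME r. ?P r)" by (rule someI[of ?P])
  then obtain s' d' p' q' where b: "(s',d',p') \<in> T" "G s d p = G s' d' p'" "q' = 2*p' \<or> q' = 2*p'+1"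
    "G s (Suc d) q = G s' (Suc d') q'" "(SOME r. ?P r) = W v s' (Suc d') q' / W v s' d' p'" by blast
  from G_inj[OF a b(1) b(2)] have eqs: "s' = s" "d' = d" "p' = p" by simp_all
  have ne: "G s (Suc d) (2*p) \<noteq> G s (Suc d) (2*p+1)" by (rule G_child_neq[OF a])
  have b4: "G s (Suc d) q = G s (Suc d) q'" using b(4) unfolding eqs .
  have "q' = q"
  proof (rule ccontr)
    assume nq: "q' \<noteq> q"
    have b3: "q' = 2*p \<or> q' = 2*p+1" using b(3) unfolding eqs .
    from q b3 nq have "(q = 2*p \<and> q' = 2*p+1) \<or> (q = 2*p+1 \<and> q' = 2*p)" by linarith
    then show False
    proof
      assume "q = 2*p \<and> q' = 2*p+1" then show False using b4 ne by simp
    next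
      assume "q = 2*p+1 \<and> q' = 2*p" then show False using b4 ne by simp
    qed
  qed
  have "wN v (G s d p) (G s (Suc d) q) = (SOME r. ?P r)"
    unfolding wN_def by (simp only: e if_True)
  also have "\<dots> = W v s' (Suc d') q' / W v s' d' p'" by (rule b(5))
  also have "\<dots> = W v s (Suc d) q / W v s d p" unfolding eqs \<open>q' = q\<close> ..
  finally show ?thesis .
qed

lemma wN_gp:
  assumes v: "gp_val S E fin fail v"
  shows "gp_val S' E' (Inl fin) (Inl fail) (wN v)"
  unfolding gp_val_def
proof (intro ballI)
  fix x assume x: "x \<in> S' - {Inl fin, Inl fail}"
  then obtain s d p where a: "(s,d,p) \<in> T" "x = G s d p" using S'_cases by blast
  have s: "s \<in> S - {fin,fail}" and dD: "d < D" using a unfolding T_def by auto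
  have sc: "succ E' x = {G s (Suc d) (2*p), G s (Suc d) (2*p+1)}" using succ_G[OF a(1)] a(2) by simp
  have pos: "W v s d' q' > 0" for d' q' unfolding W_def by (rule Wr_pos[OF v s])
  have A: "\<forall>t. (x,t) \<in> E' \<longrightarrow> wN v x t > 0"
  proof (intro allI impI)
    fix t assume "(x,t) \<in> E'"
    then have "t \<in> succ E' x" unfolding succ_def by simp
    then obtain q where q: "q = 2*p \<or> q = 2*p+1" "t = G s (Suc d) q" using sc by auto
    have "wN v x t = W v s (Suc d) q / W v s d p" unfolding q(2) a(2) by (rule wN_eq[OF a(1) q(1)])
    then show "wN v x t > 0" using pos[of "Suc d" q] pos[of d p] by simp
  qed
  have B: "\<forall>t. (x,t) \<notin> E' \<longrightarrow> wN v x t = 0" unfolding wN_def by simp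
  have ne: "G s (Suc d) (2*p) \<noteq> G s (Suc d) (2*p+1)" by (rule G_child_neq[OF a(1)])
  have e1: "wN v x (G s (Suc d) (2*p)) = W v s (Suc d) (2*p) / W v s d p"
    unfolding a(2) by (rule wN_eq[OF a(1)]) simp
  have e2: "wN v x (G s (Suc d) (2*p+1)) = W v s (Suc d) (2*p+1) / W v s d p"
    unfolding a(2) by (rule wN_eq[OF a(1)]) simp
  have "(\<Sum>t\<in>succ E' x. wN v x t) = wN v x (G s (Suc d) (2*p)) + wN v x (G s (Suc d) (2*p+1))"
    unfolding sc using ne by simp
  also have "\<dots> = (W v s (Suc d) (2*p) + W v s (Suc d) (2*p+1)) / W v s d p"
    unfolding e1 e2 by (rule add_divide_distrib[symmetric])
  also have "\<dots> = 1" using W_split[OF dD, of v s p] pos[of d p] by simp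
  finally have C: "(\<Sum>t\<in>succ E' x. wN v x t) = 1" .
  show "(\<forall>t. (x, t) \<in> E' \<longrightarrow> 0 < wN v x t) \<and> (\<forall>t. (x, t) \<notin> E' \<longrightarrow> wN v x t = 0) \<and> (\<Sum>t\<in>succ E' x. wN v x t) = 1"
    using A B C by blast
qed

lemma Lm_W:
  assumes v: "gp_val S E fin fail v" and s: "s \<in> S - {fin,fail}"
  shows "d \<le> D \<Longrightarrow> q < 2^d \<Longrightarrow> Lm (wN v) s d q = W v s d q"
proof (induction d arbitrary: q)
  case 0 then show ?case using W00[OF v s] by simp
next
  case (Suc d)
  have q2: "q div 2 < 2^d" using Suc.prems by auto
  have T: "(s,d,q div 2) \<in> T" using s Suc.prems q2 unfolding T_def by auto
  have "q = 2 * (q div 2) \<or> q = 2 * (q div 2) + 1" by auto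
  from wN_eq[OF T this] have "wN v (G s d (q div 2)) (G s (Suc d) q) = W v s (Suc d) q / W v s d (q div 2)" .
  moreover have "W v s d (q div 2) > 0" unfolding W_def by (rule Wr_pos[OF v s])
  ultimately show ?case using Suc.IH[OF _ q2] Suc.prems by simp
qed

lemma vM_eq:
  assumes v: "gp_val S E fin fail v" and s: "s \<in> S - {fin,fail}" and t: "t \<in> succ E s"
  shows "vM (wN v) s t = v s t"
proof -
  have "vM (wN v) s t = (\<Sum>q\<in>{q. q < 2^D \<and> lab s q = t}. v s t / card {q. q < 2^D \<and> lab s q = t})"
    unfolding vM_def
  proof (rule sum.cong[OF refl])
    fix q assume q: "q \<in> {q. q < 2^D \<and> lab s q = t}"
    then have "Lm (wN v) s D q = W v s D q" using Lm_W[OF v s] by simp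
    also have "\<dots> = lw v s q" unfolding W_def by simp
    finally show "Lm (wN v) s D q = v s t / card {q. q < 2^D \<and> lab s q = t}" using q unfolding lw_def by simp
  qed
  also have "\<dots> = v s t" using cnt_pos[OF s t] by (simp only: sum_constant) (rule cmul_div)
  finally show ?thesis .
qed

end

theorem lemma13:
  fixes S :: "'a set" and E :: "('a \<times> 'a) set" and fin fail :: 'a
  assumes "tpmc S E fin fail"
    and "\<forall>s \<in> S - {fin, fail}. card (succ E s) \<ge> 2"
  shows "\<exists>(S' :: ('a + nat) set) E'.
     tpmc S' E' (Inl fin) (Inl fail) \<and> Inl ` S \<subseteq> S' \<and>
     (\<forall>s \<in> S' - {Inl fin, Inl fail}. card (succ E' s) = 2) \<and>
     (\<forall>val. gp_val S E fin fail val \<longrightarrow>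
        (\<exists>val'. gp_val S' E' (Inl fin) (Inl fail) val' \<and>
           (\<forall>s \<in> S. reach_prob E fin fail val s = reach_prob E' (Inl fin) (Inl fail) val' (Inl s)))) \<and>
     (\<forall>val'. gp_val S' E' (Inl fin) (Inl fail) val' \<longrightarrow>
        (\<exists>val. gp_val S E fin fail val \<and>
           (\<forall>s \<in> S. reach_prob E fin fail val s = reach_prob E' (Inl fin) (Inl fail) val' (Inl s))))"
proof -
  interpret bin S E fin fail using assms by unfold_locales
  have d1: "\<forall>val. gp_val S E fin fail val \<longrightarrow>
        (\<exists>val'. gp_val S' E' (Inl fin) (Inl fail) val' \<and>
           (\<forall>s \<in> S. reach_prob E fin fail val s = reach_prob E' (Inl fin) (Inl fail) val' (Inl s)))"
  proof (intro allI impI)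
    fix v assume v: "gp_val S E fin fail v"
    have "\<forall>s \<in> S - {fin,fail}. \<forall>m. rbN (wN v) (m + D) (Inl s) = (\<Sum>t\<in>succ E s. v s t * rbN (wN v) m (Inl t))"
      using key_N vM_eq[OF v] by simp
    then show "\<exists>val'. gp_val S' E' (Inl fin) (Inl fail) val' \<and>
           (\<forall>s \<in> S. reach_prob E fin fail v s = reach_prob E' (Inl fin) (Inl fail) val' (Inl s))"
      using connect[OF v wN_gp[OF v]] wN_gp[OF v] by blast
  qed
  have d2: "\<forall>val'. gp_val S' E' (Inl fin) (Inl fail) val' \<longrightarrow>
        (\<exists>val. gp_val S E fin fail val \<and>
           (\<forall>s \<in> S. reach_prob E fin fail val s = reach_prob E' (Inl fin) (Inl fail) val' (Inl s)))"
  proof (intro allI impI)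
    fix w assume w: "gp_val S' E' (Inl fin) (Inl fail) w"
    define v where "v s t = (if s \<in> S - {fin,fail} \<and> (s,t) \<in> E then vM w s t else 0)" for s t
    have vs: "v s t = vM w s t" if "s \<in> S - {fin,fail}" "t \<in> succ E s" for s t
      using that unfolding v_def succ_def by simp
    have gv: "gp_val S E fin fail v"
      unfolding gp_val_def
    proof (intro ballI conjI allI impI)
      fix s t assume s: "s \<in> S - {fin,fail}"
      {
        assume "(s,t) \<in> E"
        then show "v s t > 0" using vM_pos[OF w s] s unfolding v_def succ_def by simp
      next
        assume "(s,t) \<notin> E"
        then show "v s t = 0" unfolding v_def by simp
      }
    next
      fix s assume s: "s \<in> S - {fin,fail}"
      have "(\<Sum>t\<in>succ E s. v s t) = (\<Sum>t\<in>succ E s. vM w s t)" using vs[OF s] by simp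
      then show "(\<Sum>t\<in>succ E s. v s t) = 1" using vM_sum[OF w s] by simp
    qed
    have "\<forall>s \<in> S - {fin,fail}. \<forall>m. rbN w (m + D) (Inl s) = (\<Sum>t\<in>succ E s. v s t * rbN w m (Inl t))"
      using key_N vs by simp
    then show "\<exists>val. gp_val S E fin fail val \<and>
           (\<forall>s \<in> S. reach_prob E fin fail val s = reach_prob E' (Inl fin) (Inl fail) w (Inl s))"
      using connect[OF gv w] gv by blast
  qed
  have "Inl ` S \<subseteq> S'" unfolding S'_def by blast
  then show ?thesis using tpN card2 d1 d2 by blast
qed

end
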